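(* Let $H_5$ be the 3-graph with vertex set $[6]$ and edges $142,143,145,146,251,253,254,256,361,362,364,365$. Then $\lambda(H_5)\le\frac{1}{16}$.
   Context: For a 3-uniform hypergraph $H$ on vertices $1,\dots,m$, its Lagrangian is $\lambda(H)=\max\{\sum_{ijk\in E(H)}x_ix_jx_k : x\in[0,1]^m,\ x_1+\dots+x_m=1\}$. *)

theory Defs
  imports Complex_Main
begin

text \<open>The Lagrangian is the maximum over the
standard simplex of the edge polynomial; we take the supremum (which is attained
by compactness, so it equals the maximum).\<close>

definition simplex :: "nat \<Rightarrow> (nat \<Rightarrow> real) set" where
  "simplex m = {x. (\<forall>i\<in>{1..m}. 0 \<le> x i \<and> x i \<le> 1) \<and> (\<Sum>i=1..m. x i) = 1}"

definition edge_poly :: "nat set set \<Rightarrow> (nat \<Rightarrow> real) \<Rightarrow> real" where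
  "edge_poly E x = (\<Sum>e\<in>E. \<Prod>i\<in>e. x i)"

definition lagrangian :: "nat \<Rightarrow> nat set set \<Rightarrow> real" where
  "lagrangian m E = (SUP x\<in>simplex m. edge_poly E x)"

definition H5 :: "nat set set" where
  "H5 = {{1,4,2},{1,4,3},{1,4,5},{1,4,6},{2,5,1},{2,5,3},{2,5,4},{2,5,6},
         {3,6,1},{3,6,2},{3,6,4},{3,6,5}}"

end

theory Submission
  imports Defs
begin

lemma ne: "(\<Sum>k\<in>A. (k::nat)^2) \<noteq> (\<Sum>k\<in>B. k^2) \<Longrightarrow> (A = B) = False" by auto

lemma ep: "edge_poly H5 x = x 1 * x 4 * (x 2 + x 3 + x 5 + x 6) + x 2 * x 5 * (x 1 + x 3 + x 4 + x 6)
   + x 3 * x 6 * (x 1 + x 2 + x 4 + x 5)"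
  unfolding edge_poly_def H5_def
  apply (subst sum.insert, simp, simp add: ne)+
  apply (simp add: algebra_simps)
  done

lemma term_bd:
  fixes a b c :: real
  assumes "0 \<le> a" "0 \<le> b" "a + b + c = 1" "0 \<le> c"
  shows "a * b * c \<le> (a + b) / 16"
proof -
  have e1: "(a+b)^2 - 4*(a*b) = (a-b)^2" by (simp add: power2_eq_square algebra_simps)
  have ab: "a * b \<le> (a+b)^2/4" using e1 zero_le_power2[of "a-b"] by linarith
  have e2: "(a+b+c)^2 - 4*((a+b)*c) = (a+b-c)^2" by (simp add: power2_eq_square algebra_simps)
  have o: "(a+b+c)^2 = 1" using assms(3) by simp
  have q: "(a+b)*c \<le> 1/4" using e2 o zero_le_power2[of "a+b-c"] by linarith
  have "a*b*c \<le> (a+b)^2/4 * c" using mult_right_mono[OF ab assms(4)] by simp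
  also have "\<dots> = (a+b) * ((a+b)*c) / 4" by (simp add: power2_eq_square)
  also have "\<dots> \<le> (a+b) * (1/4) / 4"
    using assms q by (intro divide_right_mono mult_left_mono) auto
  finally show ?thesis by simp
qed

theorem lemma3p3:
  shows "lagrangian 6 H5 \<le> 1 / 16"
  unfolding lagrangian_def
proof (rule cSUP_least)
  show "simplex 6 \<noteq> {}"
  proof -
    have "(\<lambda>i. if i = 1 then 1 else 0) \<in> simplex 6"
      unfolding simplex_def by (simp add: sum.If_cases)
    then show ?thesis by blast
  qed
next
  fix x assume "x \<in> simplex 6"
  then have nn: "\<And>i. i \<in> {1..6} \<Longrightarrow> 0 \<le> x i" and s: "(\<Sum>i=1..6. x i) = 1"
    unfolding simplex_def by auto
  have s': "x 1 + x 2 + x 3 + x 4 + x 5 + x 6 = 1" using s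
    by (simp add: numeral_eq_Suc)
  have n: "0 \<le> x 1" "0 \<le> x 2" "0 \<le> x 3" "0 \<le> x 4" "0 \<le> x 5" "0 \<le> x 6"
    using nn by auto
  have t1: "x 1 * x 4 * (x 2 + x 3 + x 5 + x 6) \<le> (x 1 + x 4)/16"
    by (rule term_bd) (use n s' in auto)
  have t2: "x 2 * x 5 * (x 1 + x 3 + x 4 + x 6) \<le> (x 2 + x 5)/16"
    by (rule term_bd) (use n s' in auto)
  have t3: "x 3 * x 6 * (x 1 + x 2 + x 4 + x 5) \<le> (x 3 + x 6)/16"
    by (rule term_bd) (use n s' in auto)
  have "edge_poly H5 x \<le> (x 1 + x 4)/16 + (x 2 + x 5)/16 + (x 3 + x 6)/16"
    unfolding ep using t1 t2 t3 by (intro add_mono)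
  also have "\<dots> = 1/16" using s' by argo
  finally show "edge_poly H5 x \<le> 1/16" .
qed

end
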